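(* Let $n\ge 2$ and $p>0$. Writing $x=(x',x_n)$ with $x'\in\mathbb R^{n-1}$, let $$\Omega_1=\{(x',x_n): |x'|<1,\ 0<x_n<(1-|x'|^2)^{\frac{n}{n+p-2}}\},\qquad w(x)=\tfrac12\Big[x_n-x_n^{\frac{2}{n+p}}(1-|x'|^2)^{\frac{n}{n+p}}\Big].$$ Then $w$ is smooth in $\Omega_1$, $w<0$ in $\Omega_1$, $w=0$ on $\partial\Omega_1$, and the (pointwise) Hessian determinant satisfies $\det D^2w\le|w|^{-p}$ in $\Omega_1$. (Here $w$ need not be convex.) *)

theory Defs
  imports "HOL-Analysis.Analysis"
begin

definition partial :: "'n::finite \<Rightarrow> (real^'n \<Rightarrow> real) \<Rightarrow> real^'n \<Rightarrow> real" where
  "partial i f x = deriv (\<lambda>t. f (x + t *\<^sub>R axis i 1)) 0"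

fun iter_partial :: "'n::finite list \<Rightarrow> (real^'n \<Rightarrow> real) \<Rightarrow> real^'n \<Rightarrow> real" where
  "iter_partial [] f = f"
| "iter_partial (i # is) f = partial i (iter_partial is f)"

definition smooth_on :: "(real^'n::finite) set \<Rightarrow> (real^'n \<Rightarrow> real) \<Rightarrow> bool" where
  "smooth_on S f \<longleftrightarrow>
     (\<forall>is. continuous_on S (iter_partial is f) \<and>
        (\<forall>i. \<forall>x\<in>S. (\<lambda>t. iter_partial is f (x + t *\<^sub>R axis i 1)) differentiable (at 0)))"

definition hessian :: "(real^'n::finite \<Rightarrow> real) \<Rightarrow> real^'n \<Rightarrow> real^'n^'n" where
  "hessian f x = (\<chi> i j. partial i (partial j f) x)"

text \<open>Splitting x = (x', x_n) for x in real^('m + unit), n = CARD('m) + 1.\<close>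
definition xprime :: "real^('m::finite + unit) \<Rightarrow> real^'m" where
  "xprime x = (\<chi> i. x $ Inl i)"

definition xlast :: "real^('m::finite + unit) \<Rightarrow> real" where
  "xlast x = x $ Inr ()"

end

theory Submission
  imports Defs
begin


type_synonym 'm tm = "real \<times> real \<times> real \<times> ('m \<Rightarrow> nat)"

definition mnm :: "('m::finite \<Rightarrow> nat) \<Rightarrow> real^('m+unit) \<Rightarrow> real" where
  "mnm k x = (\<Prod>i\<in>UNIV. (x $ Inl i) ^ k i)"

definition AA :: "real^('m::finite+unit) \<Rightarrow> real" where
  "AA x = 1 - (\<Sum>i\<in>UNIV. (x $ Inl i)^2)"

fun teval :: "'m::finite tm \<Rightarrow> real^('m+unit) \<Rightarrow> real" where
  "teval (c,a,b,k) x = c * (x $ Inr ()) powr a * AA x powr b * mnm k x"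

fun tder :: "('m::finite+unit) \<Rightarrow> 'm tm \<Rightarrow> 'm tm list" where
  "tder (Inr u) (c,a,b,k) = [(c*a, a-1, b, k)]"
| "tder (Inl j) (c,a,b,k) = [(-2*c*b, a, b-1, k(j := k j + 1)), (c * real (k j), a, b, k(j := k j - 1))]"

definition leval :: "'m::finite tm list \<Rightarrow> real^('m+unit) \<Rightarrow> real" where
  "leval L x = (\<Sum>T\<leftarrow>L. teval T x)"

definition lder :: "('m::finite+unit) \<Rightarrow> 'm tm list \<Rightarrow> 'm tm list" where
  "lder d L = concat (map (tder d) L)"

definition Om :: "(real^('m::finite+unit)) set" where
  "Om = {x. 0 < x $ Inr () \<and> 0 < AA x}"

lemma axis_comp [simp]: "axis d (1::real) $ l = (if l = d then 1 else 0)"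
  by (simp add: axis_def)

lemma shift_comp: "(x + t *\<^sub>R axis d 1) $ l = x $ l + (if l = d then t else 0)"
  by (simp add: axis_def)

lemma mnm_split: "mnm k x = (x$Inl j)^(k j) * (\<Prod>i\<in>UNIV-{j}. (x$Inl i)^k i)"
  unfolding mnm_def by (simp add: prod.remove)

lemma mnm_upd: "mnm (k(j:=m)) x = (x$Inl j)^m * (\<Prod>i\<in>UNIV-{j}. (x$Inl i)^k i)"
proof -
  have "(\<Prod>i\<in>UNIV-{j}. (x$Inl i)^((k(j:=m)) i)) = (\<Prod>i\<in>UNIV-{j}. (x$Inl i)^k i)"
    by (rule prod.cong) auto
  thus ?thesis unfolding mnm_split[of _ _ j] by simp
qed

lemma AA_split: "AA x = 1 - ((x$Inl j)^2 + (\<Sum>i\<in>UNIV-{j}. (x$Inl i)^2))"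
  unfolding AA_def by (simp add: sum.remove)

lemma mnm_shift_Inl: "mnm k (x + t *\<^sub>R axis (Inl j) 1) = (x$Inl j + t)^(k j) * (\<Prod>i\<in>UNIV-{j}. (x$Inl i)^k i)"
proof -
  have "(\<Prod>i\<in>UNIV-{j}. ((x + t *\<^sub>R axis (Inl j) 1)$Inl i)^k i) = (\<Prod>i\<in>UNIV-{j}. (x$Inl i)^k i)"
    by (rule prod.cong) auto
  thus ?thesis unfolding mnm_split[of _ _ j] by simp
qed

lemma AA_shift_Inl: "AA (x + t *\<^sub>R axis (Inl j) 1) = 1 - ((x$Inl j + t)^2 + (\<Sum>i\<in>UNIV-{j}. (x$Inl i)^2))"
proof -
  have "(\<Sum>i\<in>UNIV-{j}. ((x + t *\<^sub>R axis (Inl j) 1)$Inl i)^2) = (\<Sum>i\<in>UNIV-{j}. (x$Inl i)^2)"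
    by (rule sum.cong) auto
  thus ?thesis unfolding AA_split[of _ j] by simp
qed

lemma mnm_shift_Inr: "mnm k (x + t *\<^sub>R axis (Inr u) 1) = mnm k x"
  unfolding mnm_def by simp

lemma AA_shift_Inr: "AA (x + t *\<^sub>R axis (Inr u) 1) = AA x"
  unfolding AA_def by simp

lemma last_shift_Inl: "(x + t *\<^sub>R axis (Inl j) 1) $ Inr () = x $ Inr ()"
  by (simp add: axis_def)

lemma last_shift_Inr: "(x + t *\<^sub>R axis (Inr u) 1) $ Inr () = x $ Inr () + t"
  by simp

lemma tder_deriv:
  assumes x: "x \<in> Om"
  shows "((\<lambda>t. teval T (x + t *\<^sub>R axis d 1)) has_real_derivative leval (tder d T) x) (at 0)"
proof -
  obtain c a b k where T: "T = (c,a,b,k)" by (cases T) auto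
  have s: "0 < x $ Inr ()" and A: "0 < AA x" using x by (auto simp: Om_def)
  show ?thesis
  proof (cases d)
    case (Inr u)
    have "(\<lambda>t. teval T (x + t *\<^sub>R axis d 1)) = (\<lambda>t. c * (x $ Inr () + t) powr a * AA x powr b * mnm k x)"
      unfolding T Inr teval.simps mnm_shift_Inr AA_shift_Inr last_shift_Inr by simp
    moreover have "((\<lambda>t. c * (x $ Inr () + t) powr a * AA x powr b * mnm k x) has_real_derivative
        c * (a * (x $ Inr ()) powr (a - 1)) * AA x powr b * mnm k x) (at 0)"
      using s by (auto intro!: derivative_eq_intros)
    ultimately show ?thesis by (simp add: T Inr leval_def algebra_simps)
  next
    case (Inl j)
    let ?P = "\<Prod>i\<in>UNIV-{j}. (x$Inl i)^k i"
    let ?S = "\<Sum>i\<in>UNIV-{j}. (x$Inl i)^2"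
    let ?y = "x$Inl j"
    have AA0: "AA x = 1 - (?y^2 + ?S)" by (rule AA_split)
    have "(\<lambda>t. teval T (x + t *\<^sub>R axis d 1)) = (\<lambda>t. c * (x $ Inr ()) powr a * (1 - ((?y + t)^2 + ?S)) powr b * ((?y + t)^(k j) * ?P))"
      unfolding T Inl teval.simps mnm_shift_Inl AA_shift_Inl last_shift_Inl by simp
    moreover have "((\<lambda>t. c * (x $ Inr ()) powr a * (1 - ((?y + t)^2 + ?S)) powr b * ((?y + t)^(k j) * ?P)) has_real_derivative
        c * (x $ Inr ()) powr a * (b * (1 - (?y^2 + ?S)) powr (b - 1) * (- (2 * ?y))) * (?y^(k j) * ?P)
        + c * (x $ Inr ()) powr a * (1 - (?y^2 + ?S)) powr b * (real (k j) * ?y^(k j - 1) * ?P)) (at 0)"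
      using A unfolding AA0 by (auto intro!: derivative_eq_intros)
    moreover have "c * (x $ Inr ()) powr a * (b * (1 - (?y^2 + ?S)) powr (b - 1) * (- (2 * ?y))) * (?y^(k j) * ?P)
        + c * (x $ Inr ()) powr a * (1 - (?y^2 + ?S)) powr b * (real (k j) * ?y^(k j - 1) * ?P)
       = leval (tder d T) x"
      by (simp add: T Inl leval_def mnm_upd AA0[symmetric] algebra_simps)
    ultimately show ?thesis by simp
  qed
qed

lemma leval_Cons [simp]: "leval (T # L) x = teval T x + leval L x"
  by (simp add: leval_def)
lemma leval_Nil [simp]: "leval [] x = 0"
  by (simp add: leval_def)
lemma leval_append [simp]: "leval (L1 @ L2) x = leval L1 x + leval L2 x"
  by (simp add: leval_def)
lemma lder_Cons [simp]: "lder d (T # L) = tder d T @ lder d L"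
  by (simp add: lder_def)
lemma lder_Nil [simp]: "lder d [] = []"
  by (simp add: lder_def)

lemma lder_deriv:
  assumes x: "x \<in> Om"
  shows "((\<lambda>t. leval L (x + t *\<^sub>R axis d 1)) has_real_derivative leval (lder d L) x) (at 0)"
proof (induction L)
  case Nil
  then show ?case by simp
next
  case (Cons T L)
  have "((\<lambda>t. teval T (x + t *\<^sub>R axis d 1) + leval L (x + t *\<^sub>R axis d 1)) has_real_derivative
     leval (tder d T) x + leval (lder d L) x) (at 0)"
    by (intro DERIV_add tder_deriv[OF x] Cons)
  thus ?case by simp
qed

lemma open_Om: "open Om"
  unfolding Om_def AA_def
  by (intro open_Collect_conj open_Collect_less continuous_intros)

lemma cont_teval: "continuous_on Om (teval T)"
proof -
  obtain c a b k where T: "T = (c,a,b,k)" by (cases T) auto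
  have "continuous_on Om (\<lambda>x. c * (x $ Inr ()) powr a * AA x powr b * mnm k x)"
    unfolding AA_def mnm_def
    by (intro continuous_intros) (auto simp: Om_def AA_def)
  thus ?thesis by (simp add: T)
qed

lemma cont_leval: "continuous_on Om (leval L)"
proof (induction L)
  case Nil
  then show ?case by (simp add: leval_def)
next
  case (Cons T L)
  have "continuous_on Om (\<lambda>x. teval T x + leval L x)"
    by (intro continuous_on_add cont_teval Cons)
  thus ?case by simp
qed

lemma ev_line:
  fixes S :: "(real^'n::finite) set"
  assumes "open S" "x \<in> S"
  shows "eventually (\<lambda>t. x + t *\<^sub>R axis i 1 \<in> S) (nhds (0::real))"
proof -
  have "((\<lambda>t. x + t *\<^sub>R axis i 1) \<longlongrightarrow> x + 0 *\<^sub>R axis i 1) (nhds (0::real))"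
    by (intro tendsto_intros filterlim_ident)
  thus ?thesis using assms by (intro topological_tendstoD) auto
qed

lemma partial_local:
  fixes S :: "(real^'n::finite) set"
  assumes "open S" "x \<in> S" "\<And>y. y \<in> S \<Longrightarrow> f y = g y"
  shows "partial i f x = partial i g x"
  unfolding partial_def
  by (rule deriv_cong_ev[OF _ refl]) (use ev_line[OF assms(1,2), of i] assms(3) in \<open>auto elim: eventually_mono\<close>)

lemma iter_leval:
  assumes "\<And>x. x \<in> Om \<Longrightarrow> W x = leval L0 x"
  shows "x \<in> Om \<Longrightarrow> iter_partial is W x = leval (foldr lder is L0) x"
proof (induction "is" arbitrary: x)
  case Nil
  then show ?case using assms by simp
next
  case (Cons i "is")
  have "iter_partial (i # is) W x = partial i (leval (foldr lder is L0)) x"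
    using partial_local[OF open_Om Cons.prems Cons.IH] by simp
  also have "\<dots> = leval (foldr lder (i # is) L0) x"
    unfolding partial_def using lder_deriv[OF Cons.prems] by (simp add: DERIV_imp_deriv)
  finally show ?case .
qed

lemma smooth_leval:
  assumes "\<And>x. x \<in> Om \<Longrightarrow> W x = leval L0 x" "S \<subseteq> Om" "open S"
  shows "smooth_on S W"
  unfolding smooth_on_def
proof (intro allI conjI ballI)
  fix "is"
  show "continuous_on S (iter_partial is W)"
    using continuous_on_subset[OF cont_leval assms(2)] iter_leval[OF assms(1)] assms(2)
    by (metis (no_types, lifting) continuous_on_cong subsetD)
  fix i x assume x: "x \<in> S"
  have xo: "x \<in> Om" using x assms(2) by auto
  have "((\<lambda>t. iter_partial is W (x + t *\<^sub>R axis i 1)) has_real_derivative leval (lder i (foldr lder is L0)) x) (at 0)"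
  proof (subst DERIV_cong_ev[OF refl _ refl])
    show "\<forall>\<^sub>F t in nhds 0. iter_partial is W (x + t *\<^sub>R axis i 1) = leval (foldr lder is L0) (x + t *\<^sub>R axis i 1)"
    proof (rule eventually_mono[OF ev_line[OF assms(3) x, of i]])
      fix t assume "x + t *\<^sub>R axis i 1 \<in> S"
      hence "x + t *\<^sub>R axis i 1 \<in> Om" using assms(2) by blast
      thus "iter_partial is W (x + t *\<^sub>R axis i 1) = leval (foldr lder is L0) (x + t *\<^sub>R axis i 1)"
        using iter_leval[OF assms(1)] by blast
    qed
  qed (rule lder_deriv[OF xo])
  thus "(\<lambda>t. iter_partial is W (x + t *\<^sub>R axis i 1)) differentiable (at 0)"
    unfolding has_field_derivative_def by (rule differentiableI)
qed



lemma det_arrow: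
  fixes A :: "real^'n::finite^'n"
  assumes ld: "\<And>i j. i \<noteq> j \<Longrightarrow> j \<noteq> j0 \<Longrightarrow> A$i$j = 0"
  shows "det A = prod (\<lambda>i. A$i$i) (UNIV::'n set)"
proof -
  let ?U = "UNIV:: 'n set"
  let ?PU = "{p. p permutes ?U}"
  let ?pp = "\<lambda>p. of_int (sign p) * prod (\<lambda>i. A$i$p i) (UNIV :: 'n set)"
  have fU: "finite ?U" by simp
  from finite_permutations[OF fU] have fPU: "finite ?PU" .
  have id0: "{id} \<subseteq> ?PU"
    by (auto simp: permutes_id)
  have p0: "\<forall>p \<in> ?PU - {id}. ?pp p = 0"
  proof
    fix p
    assume p: "p \<in> ?PU - {id}"
    then obtain i where i: "p i \<noteq> i"
      by fastforce
    have "\<exists>i \<in> ?U. A$i$p i = 0"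
    proof (cases "p i = j0")
      case False thus ?thesis using ld[of i "p i"] i False by (intro bexI[of _ i]) auto
    next
      case True
      have inj: "inj p" using p permutes_inj by blast
      have "p j0 \<noteq> j0" using inj i True by (metis injD)
      thus ?thesis using ld[of j0 "p j0"] by (intro bexI[of _ j0]) auto
    qed
    with prod_zero [OF fU] show "?pp p = 0"
      by force
  qed
  from sum.mono_neutral_cong_left[OF fPU id0 p0] show ?thesis
    unfolding det_def by (simp add: sign_id)
qed


lemma sum_UNIV_plus: "(\<Sum>k\<in>(UNIV::('a::finite + unit) set). f k) = (\<Sum>i\<in>UNIV. f (Inl i)) + f (Inr ())"
  by (subst UNIV_Plus_UNIV[symmetric], subst sum.Plus) (auto simp: UNIV_unit)

lemma prod_UNIV_plus: "(\<Prod>k\<in>(UNIV::('a::finite + unit) set). f k) = (\<Prod>i\<in>UNIV. f (Inl i)) * f (Inr ())"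
  by (subst UNIV_Plus_UNIV[symmetric], subst prod.Plus) (auto simp: UNIV_unit)

lemma ifmult: "(if P then 1 else 0) * (z::real) = (if P then z else 0)"
  by simp

lemma det_struct:
  fixes H :: "real^('m::finite+unit)^('m+unit)" and y :: "'m \<Rightarrow> real"
  assumes h1: "H $ Inr () $ Inr () = a0"
    and h2: "\<And>j. H $ Inr () $ Inl j = b * y j"
    and h3: "\<And>i. H $ Inl i $ Inr () = b * y i"
    and h4: "\<And>i j. H $ Inl i $ Inl j = g * y i * y j + (if i = j then l else 0)"
    and b: "b \<noteq> 0" and l: "l \<noteq> 0"
  shows "det H = l ^ CARD('m) * (a0 - (b^2 - g*a0) * (\<Sum>i\<in>UNIV. y i ^2) / l)"
proof -
  define Y :: "real^('m+unit)" where "Y = (\<chi> k. case k of Inl i \<Rightarrow> y i | Inr _ \<Rightarrow> 0)"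
  define E :: "real^('m+unit)" where "E = (\<chi> k. if k = Inr () then 1 else 0)"
  define F :: "real^('m+unit)^('m+unit)" where "F = (\<chi> k l. (if k = l then 1 else 0) - (g/b) * Y$k * E$l)"
  define F2 :: "real^('m+unit)^('m+unit)" where "F2 = (\<chi> k l'. (if k = l' then 1 else 0) - (b/l) * E$k * Y$l')"
  have YE: "Y $ Inl i = y i" "Y $ Inr u = 0" "E $ Inl i = 0" "E $ Inr u = 1" for i u
    by (simp_all add: Y_def E_def)
  have FM: "(F ** M) $ k $ l' = M$k$l' - (g/b) * Y$k * M$Inr()$l'" for M :: "real^('m+unit)^('m+unit)" and k l'
  proof -
    have "(F ** M) $ k $ l' = (\<Sum>m\<in>UNIV. (if k = m then 1 else 0) * M$m$l' - (g/b) * Y$k * (E$m * M$m$l'))"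
      by (simp add: matrix_matrix_mult_def F_def algebra_simps)
    also have "\<dots> = M$k$l' - (g/b) * Y$k * M$Inr()$l'"
      unfolding sum_subtractf sum_distrib_left[symmetric] E_def vec_lambda_beta ifmult by simp
    finally show ?thesis .
  qed
  have F2M: "(F2 ** M) $ k $ l' = M$k$l' - (b/l) * E$k * (\<Sum>i\<in>UNIV. y i * M$Inl i$l')" for M :: "real^('m+unit)^('m+unit)" and k l'
  proof -
    have "(F2 ** M) $ k $ l' = (\<Sum>m\<in>UNIV. (if k = m then 1 else 0) * M$m$l' - (b/l) * E$k * (Y$m * M$m$l'))"
      by (simp add: matrix_matrix_mult_def F2_def algebra_simps)
    also have "\<dots> = M$k$l' - (b/l) * E$k * (\<Sum>m\<in>UNIV. Y$m * M$m$l')"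
      unfolding sum_subtractf sum_distrib_left[symmetric] ifmult by simp
    also have "(\<Sum>m\<in>UNIV. Y$m * M$m$l') = (\<Sum>i\<in>UNIV. y i * M$Inl i$l')"
      by (simp add: sum_UNIV_plus YE)
    finally show ?thesis .
  qed
  define K where "K = F2 ** (F ** H)"
  have FH1: "(F ** H) $ Inl i $ Inl j = (if i = j then l else 0)" for i j
    unfolding FM using b by (simp add: h4 h2 YE)
  have FH2: "(F ** H) $ Inl i $ Inr () = (b - g*a0/b) * y i" for i
    unfolding FM using b by (simp add: h3 h1 YE algebra_simps)
  have FH3: "(F ** H) $ Inr () $ l' = H $ Inr () $ l'" for l'
    unfolding FM by (simp add: YE)
  have K1: "K $ Inl i $ l' = (F ** H) $ Inl i $ l'" for i l'
    unfolding K_def F2M by (simp add: YE)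
  have K2: "K $ Inr () $ Inl j = 0" for j
  proof -
    have "(\<Sum>i\<in>UNIV. y i * (F ** H)$Inl i$Inl j) = y j * l"
      by (simp add: FH1 if_distrib cong: if_cong)
    thus ?thesis unfolding K_def F2M using l by (simp add: YE FH3 h2)
  qed
  have K3: "K $ Inr () $ Inr () = a0 - (b^2 - g*a0) * (\<Sum>i\<in>UNIV. y i ^2) / l"
  proof -
    have "(\<Sum>i\<in>UNIV. y i * (F ** H)$Inl i$Inr ()) = (b - g*a0/b) * (\<Sum>i\<in>UNIV. y i ^2)"
      by (simp add: FH2 sum_distrib_left power2_eq_square algebra_simps)
    thus ?thesis unfolding K_def F2M using b l by (simp add: YE FH3 h1 field_simps power2_eq_square)
  qed
  have detK: "det K = l ^ CARD('m) * (a0 - (b^2 - g*a0) * (\<Sum>i\<in>UNIV. y i ^2) / l)"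
  proof -
    have "det K = (\<Prod>k\<in>UNIV. K $ k $ k)"
    proof (rule det_arrow[where ?j0.0="Inr ()"])
      fix k l' :: "'m + unit" assume "k \<noteq> l'" "l' \<noteq> Inr ()"
      then obtain j where j: "l' = Inl j" by (cases l') auto
      show "K $ k $ l' = 0"
      proof (cases k)
        case (Inl i) thus ?thesis using j \<open>k \<noteq> l'\<close> by (simp add: K1 FH1)
      next
        case (Inr u) thus ?thesis using j K2 by simp
      qed
    qed
    also have "\<dots> = l ^ CARD('m) * K $ Inr () $ Inr ()"
      by (simp add: prod_UNIV_plus K1 FH1)
    finally show ?thesis by (simp add: K3)
  qed
  have detF: "det F = 1"
  proof -
    have "det F = (\<Prod>k\<in>UNIV. F $ k $ k)"
    proof (rule det_arrow[where ?j0.0="Inr ()"])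
      fix k l' :: "'m + unit" assume "k \<noteq> l'" "l' \<noteq> Inr ()"
      then obtain j where j: "l' = Inl j" by (cases l') auto
      show "F $ k $ l' = 0" using j \<open>k \<noteq> l'\<close> by (simp add: F_def YE)
    qed
    also have "\<dots> = 1" by (simp add: prod_UNIV_plus F_def YE)
    finally show ?thesis .
  qed
  have detF2: "det F2 = 1"
  proof -
    have "det F2 = det (transpose F2)" by simp
    also have "\<dots> = (\<Prod>k\<in>UNIV. transpose F2 $ k $ k)"
    proof (rule det_arrow[where ?j0.0="Inr ()"])
      fix k l' :: "'m + unit" assume "k \<noteq> l'" "l' \<noteq> Inr ()"
      then obtain j where j: "l' = Inl j" by (cases l') auto
      show "transpose F2 $ k $ l' = 0" using j \<open>k \<noteq> l'\<close> by (simp add: F2_def YE transpose_def)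
    qed
    also have "\<dots> = 1" by (simp add: prod_UNIV_plus F2_def YE transpose_def)
    finally show ?thesis .
  qed
  have "det K = det H" unfolding K_def by (simp add: det_mul detF detF2)
  thus ?thesis using detK by simp
qed



lemma qq: "(q::real) * (3*(1-q)/2) \<le> 1"
proof -
  have h: "0 \<le> (q - 1/2)^2" by simp
  show ?thesis using h by (simp add: power2_eq_square field_simps)
qed

lemma final_ineq:
  fixes s A p :: real and m :: nat
  assumes s: "s > 0" and A: "A > 0" "A \<le> 1" and p: "p > 0" and m: "m \<ge> 1"
  assumes n_def: "n = real m + 1"
  assumes q_def: "q = 2/(n+p)" and r_def: "r = n/(n+p)"
  defines "S \<equiv> s powr q" and "T \<equiv> A powr r"
  defines "l \<equiv> r*S*(T/A)" and "b \<equiv> q*r*(S/s)*(T/A)" and "g \<equiv> -2*r*(r-1)*S*(T/A^2)"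
      and "a0 \<equiv> -1/2*q*(q-1)*(S/s^2)*T"
  shows "l^m * (a0 - (b^2 - g*a0)*(1-A)/l) \<le> (S*T) powr (-p)"
proof -
  have n: "n \<ge> 2" using m by (simp add: n_def)
  have q: "0 < q" "q < 1" using n p by (auto simp: q_def field_simps)
  have r: "0 < r" "r < 1" using n p by (auto simp: r_def field_simps)
  have S: "S > 0" and T: "T > 0" using s A by (auto simp: S_def T_def)
  define E where "E = A*(1-q)/2 + (1-A)*(1-q-r)"
  have st1: "a0 - (b^2 - g*a0)*(1-A)/l = q * (S/s^2) * (T/A) * E"
    using s A S T r q unfolding l_def b_def g_def a0_def E_def
    by (simp add: field_simps power2_eq_square)
  have st2: "l^m * (a0 - (b^2 - g*a0)*(1-A)/l) = (r^m * q * E) * ((S^(m+1)/s^2) * (T^(m+1)/A^(m+1)))"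
  proof -
    have lm: "l^m = r^m * S^m * T^m / A^m" unfolding l_def by (simp add: power_mult_distrib power_divide)
    show ?thesis unfolding st1 lm using s A S T r by (simp add: field_simps)
  qed
  have e1: "S^(m+1) / s^2 = s powr (-q*p)"
  proof -
    have "S^(m+1) = s powr (q * n)" unfolding S_def n_def
      using s by (simp add: powr_realpow[symmetric] powr_powr algebra_simps powr_add)
    moreover have "s^2 = s powr 2" using s by simp
    moreover have "q * n - 2 = -q*p" using n p unfolding q_def by (simp add: field_simps)
    ultimately show ?thesis using s by (metis powr_diff)
  qed
  have e2: "T^(m+1) / A^(m+1) = A powr (-r*p)"
  proof -
    have "T^(m+1) = A powr (r * n)" unfolding T_def n_def
      using A by (simp add: powr_realpow[symmetric] powr_powr algebra_simps powr_add)
    moreover have "A^(m+1) = A powr n" using A unfolding n_def by (simp add: powr_realpow powr_add)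
    moreover have "r * n - n = -r*p" using n p unfolding r_def by (simp add: field_simps)
    ultimately show ?thesis using A by (metis powr_diff)
  qed
  have e3: "(S*T) powr (-p) = s powr (-q*p) * A powr (-r*p)"
    unfolding S_def T_def using s A by (simp add: powr_mult powr_powr)
  have X: "s powr (-q*p) * A powr (-r*p) > 0" using s A by simp
  have bound: "r^m * q * E \<le> 1"
  proof (cases "E \<ge> 0")
    case True
    have "E \<le> 3*(1-q)/2"
    proof -
      have "A*(1-q)/2 \<le> (1-q)/2" using A q by (simp add: mult_le_cancel_right1 divide_right_mono)
      moreover have "(1-A)*(1-q-r) \<le> 1 - q"
      proof (cases "1-q-r \<ge> 0")
        case True
        have "(1-A)*(1-q-r) \<le> 1*(1-q-r)" using A True by (intro mult_right_mono) auto
        thus ?thesis using r by simp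
      next
        case False
        have "(1-A)*(1-q-r) \<le> 0" using A False by (simp add: mult_nonneg_nonpos)
        thus ?thesis using q by simp
      qed
      ultimately show ?thesis unfolding E_def by simp
    qed
    hence "q * E \<le> q * (3*(1-q)/2)" using q by simp
    also have "\<dots> \<le> 1" by (rule qq)
    finally have qE: "q*E \<le> 1" .
    have "r^m \<le> 1" using r by (simp add: power_le_one)
    hence "r^m * (q*E) \<le> 1 * 1" using qE r q True by (intro mult_mono) auto
    thus ?thesis by (simp add: mult.assoc)
  next
    case False
    hence "r^m * q * E \<le> 0" using r q by (simp add: mult_nonneg_nonpos)
    thus ?thesis by simp
  qed
  show ?thesis unfolding st2 e1 e2 e3 using mult_right_mono[OF bound less_imp_le[OF X]] by simp
qed


lemma mnm0: "mnm (\<lambda>_. 0) x = 1"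
  by (simp add: mnm_def)

lemma mnm1: "mnm ((\<lambda>_. 0)(j := m)) x = (x$Inl j)^m"
  by (simp add: mnm_upd)

lemma mnm2: "i \<noteq> j \<Longrightarrow> mnm (((\<lambda>_. 0)(j := 1))(i := m)) x = (x$Inl i)^m * x$Inl j"
proof -
  assume ij: "i \<noteq> j"
  have "(\<Prod>l\<in>UNIV-{i}. (x$Inl l)^(((\<lambda>_. 0)(j := 1)) l)) = (\<Prod>l\<in>UNIV. (x$Inl l)^(((\<lambda>_. 0)(j := 1)) l)) / 1"
  proof -
    have "(\<Prod>l\<in>UNIV. (x$Inl l)^(((\<lambda>_. 0)(j := 1)) l)) = (x$Inl i)^(((\<lambda>_. 0)(j := 1)) i) * (\<Prod>l\<in>UNIV-{i}. (x$Inl l)^(((\<lambda>_. 0)(j := 1)) l))"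
      by (simp add: prod.remove)
    thus ?thesis using ij by simp
  qed
  also have "\<dots> = x$Inl j" using mnm1[of j 1 x] by (simp add: mnm_def)
  finally show ?thesis by (simp add: mnm_upd)
qed

lemma mnm2': "i \<noteq> j \<Longrightarrow> mnm ((\<lambda>_. 0)(j := Suc 0, i := Suc 0)) x = x$Inl i * x$Inl j"
  using mnm2[of i j 1 x] by simp

lemma card_plus_unit: "CARD('m::finite + unit) = CARD('m) + 1"
proof -
  have "CARD('m + unit) = card ((UNIV::'m set) <+> (UNIV::unit set))" by simp
  also have "\<dots> = CARD('m) + 1" by (subst card_Plus) auto
  finally show ?thesis .
qed

theorem lemma4p1:
  fixes p :: real and \<Omega>1 :: "(real^('m::finite + unit)) set" and w :: "real^('m + unit) \<Rightarrow> real"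
  defines "n \<equiv> real CARD('m + unit)"
  defines "\<Omega>1 \<equiv> {x. norm (xprime x) < 1 \<and> 0 < xlast x \<and>
                     xlast x < (1 - norm (xprime x) ^ 2) powr (n / (n + p - 2))}"
  defines "w \<equiv> (\<lambda>x. (1/2) * (xlast x - xlast x powr (2 / (n + p)) *
                     (1 - norm (xprime x) ^ 2) powr (n / (n + p))))"
  assumes "p > 0"
  shows "smooth_on \<Omega>1 w \<and> (\<forall>x\<in>\<Omega>1. w x < 0) \<and> (\<forall>x\<in>frontier \<Omega>1. w x = 0) \<and>
         (\<forall>x\<in>\<Omega>1. det (hessian w x) \<le> \<bar>w x\<bar> powr (- p))"
proof -
  have p: "p > 0" by fact
  have nm: "n = real CARD('m) + 1" unfolding n_def by (simp add: card_plus_unit)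
  have m1: "CARD('m) \<ge> 1" by (simp add: Suc_leI)
  have n2: "n \<ge> 2" using nm m1 by simp
  define q where "q = 2/(n+p)"
  define r where "r = n/(n+p)"
  define e where "e = n/(n+p-2)"
  have q: "0 < q" "q < 1" using n2 p by (auto simp: q_def field_simps)
  have r: "0 < r" "r < 1" using n2 p by (auto simp: r_def field_simps)
  have e: "e > 0" using n2 p by (simp add: e_def)
  have np: "n + p - 2 > 0" "n + p > 0" using n2 p by auto
  have q1: "1 - q = (n+p-2)/(n+p)" using np unfolding q_def by (simp add: field_simps)
  have er: "e * (1 - q) = r" unfolding q1 e_def r_def using np by simp
  have eqr: "e * q + r = e" using er by (simp add: right_diff_distrib)
  have normsq: "norm (xprime x)^2 = (\<Sum>i\<in>UNIV. (x$Inl i)^2)" for x :: "real^('m+unit)"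
    unfolding power2_norm_eq_inner inner_vec_def xprime_def by (simp add: power2_eq_square)
  have A_eq: "1 - norm (xprime x)^2 = AA x" for x :: "real^('m+unit)" by (simp add: AA_def normsq)
  have w_eq: "w x = 1/2 * (x$Inr () - (x$Inr ()) powr q * AA x powr r)" for x
    unfolding w_def xlast_def A_eq q_def r_def by simp
  have norm_lt: "norm (xprime x) < 1 \<longleftrightarrow> 0 < AA x" for x :: "real^('m+unit)"
  proof -
    have "norm (xprime x) < 1 \<longleftrightarrow> norm (xprime x)^2 < 1"
      by (metis abs_norm_cancel abs_square_less_1)
    thus ?thesis using A_eq[of x] by linarith
  qed
  have Om1: "\<Omega>1 = {x \<in> Om. x$Inr () < AA x powr e}"
    unfolding \<Omega>1_def Om_def e_def xlast_def A_eq norm_lt by auto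
  have sub: "\<Omega>1 \<subseteq> Om" unfolding Om1 by auto
  have open1: "open \<Omega>1"
  proof -
    have c1: "continuous_on Om (\<lambda>x::real^('m+unit). x$Inr ())" by (intro continuous_intros)
    have c2: "continuous_on Om (\<lambda>x::real^('m+unit). AA x powr e)"
      unfolding AA_def by (intro continuous_intros) (auto simp: Om_def AA_def)
    obtain U :: "(real^('m+unit)) set" where U: "open U" "U \<inter> Om = {x\<in>Om. x$Inr () < AA x powr e}"
      using open_Collect_less_Int[OF c1 c2] by blast
    show ?thesis unfolding Om1 U(2)[symmetric] using U(1) open_Om by auto
  qed
  define L0 :: "'m tm list" where "L0 = [(1/2, 1, 0, \<lambda>_. 0), (-1/2, q, r, \<lambda>_. 0)]"
  have wL: "w x = leval L0 x" if "x \<in> Om" for x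
  proof -
    have "x$Inr () > 0" "AA x > 0" using that by (auto simp: Om_def)
    thus ?thesis by (simp add: w_eq L0_def mnm0 algebra_simps)
  qed
  have smooth: "smooth_on \<Omega>1 w" by (rule smooth_leval[OF wL sub open1])
  have neg: "w x < 0" if x: "x \<in> \<Omega>1" for x
  proof -
    let ?s = "x$Inr ()" and ?A = "AA x"
    have s: "?s > 0" and A: "?A > 0" and lt: "?s < ?A powr e" using x unfolding Om1 Om_def by auto
    have "?s powr (1-q) < (?A powr e) powr (1-q)" using s lt q by (intro powr_less_mono2) auto
    also have "\<dots> = ?A powr r" by (simp add: powr_powr er)
    finally have "?s powr q * ?s powr (1-q) < ?s powr q * ?A powr r" using s by simp
    moreover have "?s powr q * ?s powr (1-q) = ?s" using s by (simp add: powr_add[symmetric])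
    ultimately show ?thesis unfolding w_eq by simp
  qed
  have front: "w x = 0" if x: "x \<in> frontier \<Omega>1" for x
  proof -
    define C where "C = {x::real^('m+unit). (\<Sum>i\<in>UNIV. (x$Inl i)^2) \<le> 1 \<and> 0 \<le> x$Inr () \<and> x$Inr () \<le> (max 0 (AA x)) powr e}"
    have closedC: "closed C"
      unfolding C_def AA_def
      by (intro closed_Collect_conj closed_Collect_le continuous_intros continuous_on_powr')
         (use e in auto)
    have "\<Omega>1 \<subseteq> C" unfolding Om1 C_def Om_def AA_def by auto
    hence "closure \<Omega>1 \<subseteq> C" using closure_minimal closedC by blast
    hence xC: "x \<in> C" and xn: "x \<notin> \<Omega>1"
      using x unfolding frontier_def interior_open[OF open1] by auto
    let ?s = "x$Inr ()" and ?A = "AA x"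
    show ?thesis
    proof (cases "?s = 0")
      case True thus ?thesis unfolding w_eq by simp
    next
      case False
      hence s: "?s > 0" using xC unfolding C_def by auto
      have A0: "?A \<ge> 0" using xC unfolding C_def AA_def by auto
      have le: "?s \<le> ?A powr e" using xC A0 unfolding C_def by (auto simp: max_def)
      have A: "?A > 0"
      proof (rule ccontr)
        assume "\<not> ?A > 0" hence "?A = 0" using A0 by simp
        thus False using le s by simp
      qed
      have "\<not> ?s < ?A powr e" using xn s A unfolding Om1 Om_def by auto
      hence seq: "?s = ?A powr e" using le by simp
      have "?s powr q * ?A powr r = ?A powr (e*q + r)"
        unfolding seq by (simp add: powr_powr powr_add)
      also have "\<dots> = ?s" using eqr seq by simp
      finally show ?thesis unfolding w_eq by simp
    qed
  qed
  have hess: "det (hessian w x) \<le> \<bar>w x\<bar> powr (- p)" if x: "x \<in> \<Omega>1" for x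
  proof -
    let ?s = "x$Inr ()" and ?A = "AA x"
    have xo: "x \<in> Om" using x sub by auto
    have s: "?s > 0" and A: "?A > 0" using xo by (auto simp: Om_def)
    have A1: "?A \<le> 1" unfolding AA_def by (simp add: sum_nonneg)
    have hij: "hessian w x $ i $ j = leval (lder i (lder j L0)) x" for i j
      unfolding hessian_def using iter_leval[OF wL xo, of "[i,j]"] by simp
    have e1: "hessian w x $ Inr () $ Inr () = -1/2*q*(q-1) * ?s powr (q-2) * ?A powr r"
      unfolding hij using s A by (simp add: L0_def mnm0 algebra_simps)
    have e2: "hessian w x $ Inr () $ Inl j = (q*r*?s powr (q-1) * ?A powr (r-1)) * x$Inl j" for j
      unfolding hij using s A by (simp add: L0_def mnm0 mnm1 algebra_simps)
    have e3: "hessian w x $ Inl i $ Inr () = (q*r*?s powr (q-1) * ?A powr (r-1)) * x$Inl i" for i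
      unfolding hij using s A by (simp add: L0_def mnm0 mnm1 algebra_simps)
    have e4: "hessian w x $ Inl i $ Inl j = (-2*r*(r-1)*?s powr q * ?A powr (r-2)) * x$Inl i * x$Inl j
        + (if i = j then r * ?s powr q * ?A powr (r-1) else 0)" for i j
    proof (cases "i = j")
      case True thus ?thesis
        unfolding hij using s A by (simp add: L0_def mnm0 mnm1 algebra_simps power2_eq_square)
    next
      case False thus ?thesis
        unfolding hij using s A by (simp add: L0_def mnm0 mnm1 mnm2 mnm2' algebra_simps)
    qed
    have bnz: "q*r*?s powr (q-1) * ?A powr (r-1) \<noteq> 0" using q r s A by simp
    have lnz: "r * ?s powr q * ?A powr (r-1) \<noteq> 0" using q r s A by simp
    have D: "det (hessian w x) = (r * ?s powr q * ?A powr (r-1)) ^ CARD('m) *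
        (-1/2*q*(q-1) * ?s powr (q-2) * ?A powr r -
         ((q*r*?s powr (q-1) * ?A powr (r-1))^2 - (-2*r*(r-1)*?s powr q * ?A powr (r-2)) * (-1/2*q*(q-1) * ?s powr (q-2) * ?A powr r))
         * (\<Sum>i\<in>UNIV. (x$Inl i)^2) / (r * ?s powr q * ?A powr (r-1)))"
      by (rule det_struct[OF e1 e2 e3 e4 bnz lnz])
    have sumA: "(\<Sum>i\<in>UNIV. (x$Inl i)^2) = 1 - ?A" unfolding AA_def by simp
    let ?S = "?s powr q" and ?T = "?A powr r"
    have p1: "?s powr (q-1) = ?S/?s" using s by (simp add: powr_diff)
    have p2: "?s powr (q-2) = ?S/?s^2" using s by (simp add: powr_diff)
    have p3: "?A powr (r-1) = ?T/?A" using A by (simp add: powr_diff)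
    have p4: "?A powr (r-2) = ?T/?A^2" using A by (simp add: powr_diff)
    have F: "det (hessian w x) \<le> (?S * ?T) powr (-p)"
      unfolding D sumA p1 p2 p3 p4 by (rule final_ineq[OF s A A1 p m1 nm q_def r_def])
    have wpos: "\<bar>w x\<bar> > 0" using neg[OF x] by simp
    have ST: "?S * ?T > 0" using s A by simp
    have wabs: "\<bar>w x\<bar> = (?S * ?T - ?s)/2" using neg[OF x] unfolding w_eq by simp
    have wle: "\<bar>w x\<bar> \<le> ?S * ?T" unfolding wabs
    proof -
      have gen: "\<And>a b::real. 0 < a \<Longrightarrow> 0 < b \<Longrightarrow> (b - a)/2 \<le> b" by simp
      show "(?S * ?T - ?s)/2 \<le> ?S * ?T" by (rule gen[OF s ST])
    qed
    have "(?S * ?T) powr (-p) \<le> \<bar>w x\<bar> powr (-p)"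
      using powr_mono2'[of "-p" "\<bar>w x\<bar>" "?S * ?T"] p wpos wle by simp
    thus ?thesis using F by linarith
  qed
  show ?thesis using smooth neg front hess by blast
qed

end
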